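(* Let $\alpha\in(0,1)$, $\lambda>0$, and let $p\in L^\infty(0,T)$ satisfy $p_0\le p(t)\le p_1$ for $t\in(0,T)$ with constants $p_0,p_1>0$. If $z\in W^{1,\infty}(0,T)$ satisfies $z(t)\ge0$ and $$\partial_tz(t)+p(t)\partial_t^\alpha z(t)+\lambda z(t)\le0,\qquad 0<t<T,$$ then $\partial_t^\alpha z(t)\le0$ for $0<t<T$.
   Context: $\partial_t^\alpha\varphi(t)=\frac{1}{\Gamma(1-\alpha)}\int_0^t(t-\tau)^{-\alpha}\varphi'(\tau)d\tau$ is the Caputo derivative. *)

theory Defs
  imports "HOL-Analysis.Analysis"
begin

text \<open>z \<in> W^{1,\<infinity>}(0,T) with (weak) derivative dz: dz is measurable and essentially
  bounded on (0,T), and z is the (continuous representative) primitive of dz on [0,T].\<close>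
definition W1inf :: "real \<Rightarrow> (real \<Rightarrow> real) \<Rightarrow> (real \<Rightarrow> real) \<Rightarrow> bool" where
  "W1inf T z dz \<longleftrightarrow>
     set_borel_measurable lborel {0<..<T} dz \<and>
     (\<exists>C. AE t in lborel. t \<in> {0<..<T} \<longrightarrow> \<bar>dz t\<bar> \<le> C) \<and>
     (\<forall>t\<in>{0..T}. z t = z 0 + (LBINT s:{0..t}. dz s))"

definition caputo :: "real \<Rightarrow> (real \<Rightarrow> real) \<Rightarrow> real \<Rightarrow> real" where
  "caputo \<alpha> dz t = (1 / Gamma (1 - \<alpha>)) * (LBINT \<tau>:{0<..<t}. (t - \<tau>) powr (-\<alpha>) * dz \<tau>)"

end

theory Submission
  imports Defs
begin

lemma hk_to_lborel:
  fixes f :: "real \<Rightarrow> real"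
  assumes I: "(f has_integral I) {c..t}" and nn: "\<And>x. x \<in> {c..t} \<Longrightarrow> 0 \<le> f x"
    and m: "f \<in> borel_measurable borel"
  shows "set_integrable lborel {c..t} f \<and> (LBINT x:{c..t}. f x) = I"
proof -
  have ai: "f absolutely_integrable_on {c..t}"
    using I nn by (intro nonnegative_absolutely_integrable_1) auto
  have si: "set_integrable lborel {c..t} f"
    using ai unfolding set_integrable_def
    by (subst integrable_completion[symmetric]) (use m in auto)
  moreover have "(LBINT x:{c..t}. f x) = integral {c..t} f"
    using set_borel_integral_eq_integral[OF si] by simp
  ultimately show ?thesis using I by (simp add: integral_unique)
qed

lemma Icc_Ioo:
  fixes f :: "real \<Rightarrow> real"
  shows "set_integrable lborel {c..t} f \<longleftrightarrow> set_integrable lborel {c<..<t} f"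
    and "(LBINT x:{c..t}. f x) = (LBINT x:{c<..<t}. f x)"
  by (rule set_integrable_discrete_difference[where X="{c,t}"]; auto)
     (rule set_integral_discrete_difference[where X="{c,t}"]; auto)

lemma pow_int:
  fixes a c t :: real
  assumes a: "0 < a" "a < 1" and ct: "c \<le> t"
  shows "set_integrable lborel {c<..<t} (\<lambda>x. (t - x) powr (-a)) \<and>
         (LBINT x:{c<..<t}. (t - x) powr (-a)) = (t - c) powr (1 - a) / (1 - a)"
proof -
  define F where "F x = - ((t - x) powr (1 - a) / (1 - a))" for x
  have "((\<lambda>x. (t - x) powr (-a)) has_integral (F t - F c)) {c..t}"
  proof (rule fundamental_theorem_of_calculus_interior[OF ct])
    show "continuous_on {c..t} F" unfolding F_def using a
      by (intro continuous_intros continuous_on_powr') auto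
    show "(F has_vector_derivative (t - x) powr (-a)) (at x)" if "x \<in> {c<..<t}" for x
    proof -
      have d: "((\<lambda>x. (t - x) powr (1 - a)) has_real_derivative (-(1-a) * (t - x) powr (-a))) (at x)"
        using that by (auto intro!: derivative_eq_intros simp: algebra_simps)
      have "((\<lambda>x. - ((t - x) powr (1 - a) / (1 - a))) has_real_derivative (- ((-(1-a) * (t - x) powr (-a)) / (1-a)))) (at x)"
        by (intro derivative_intros DERIV_cdivide d)
      then have "(F has_real_derivative (t - x) powr (-a)) (at x)"
        unfolding F_def by (rule DERIV_cong) (use a in \<open>simp add: field_simps\<close>)
      then show ?thesis by (simp add: has_real_derivative_iff_has_vector_derivative)
    qed
  qed
  moreover have "F t - F c = (t - c) powr (1 - a) / (1 - a)" unfolding F_def by simp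
  ultimately have "set_integrable lborel {c..t} (\<lambda>x. (t - x) powr (-a)) \<and>
         (LBINT x:{c..t}. (t - x) powr (-a)) = (t - c) powr (1 - a) / (1 - a)"
    by (intro hk_to_lborel) auto
  then show ?thesis using Icc_Ioo by metis
qed

lemma split_Ioo:
  fixes f :: "real \<Rightarrow> real"
  assumes f: "set_integrable lborel {c<..<t} f" and m: "c \<le> m" "m \<le> t"
  shows "set_integrable lborel {c<..<m} f" "set_integrable lborel {m<..<t} f"
    "(LBINT x:{c<..<t}. f x) = (LBINT x:{c<..<m}. f x) + (LBINT x:{m<..<t}. f x)"
proof -
  show f1: "set_integrable lborel {c<..<m} f"
    by (rule set_integrable_subset[OF f]) (use m in auto)
  show f2: "set_integrable lborel {m<..<t} f"
    by (rule set_integrable_subset[OF f]) (use m in auto)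
  have "(LBINT x:{c<..<t}. f x) = (LBINT x:{c<..<m} \<union> {m<..<t}. f x)"
    by (rule set_integral_discrete_difference[where X="{m}"]) (use m in auto)
  also have "\<dots> = (LBINT x:{c<..<m}. f x) + (LBINT x:{m<..<t}. f x)"
    by (rule set_integral_Un[OF _ f1 f2]) auto
  finally show "(LBINT x:{c<..<t}. f x) = (LBINT x:{c<..<m}. f x) + (LBINT x:{m<..<t}. f x)" .
qed

lemma aux_absb: "\<bar>d\<bar> \<le> (B::real) \<Longrightarrow> 0 \<le> g \<Longrightarrow> -(B*g) \<le> d*g \<and> d*g \<le> B*g"
  using mult_right_mono[of "-B" d g] mult_right_mono[of d B g] by (auto simp: abs_le_iff)

lemma GL:
  fixes D g :: "real \<Rightarrow> real"
  assumes Dm[measurable]: "D \<in> borel_measurable borel" and DB: "AE x in lborel. \<bar>D x\<bar> \<le> B"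
    and S[measurable]: "S \<in> sets borel" and gi: "set_integrable lborel S g"
    and gm[measurable]: "g \<in> borel_measurable borel" and gnn: "\<And>x. x \<in> S \<Longrightarrow> 0 \<le> g x"
  shows "set_integrable lborel S (\<lambda>x. g x * D x)"
    "\<bar>LBINT x:S. g x * D x\<bar> \<le> B * (LBINT x:S. g x)"
proof -
  have gi': "integrable lborel (\<lambda>x. indicator S x * (B * g x))"
    using gi unfolding set_integrable_def by (auto intro: integrable_mult_right simp: mult.left_commute)
  show si: "set_integrable lborel S (\<lambda>x. g x * D x)"
    unfolding set_integrable_def
  proof (rule Bochner_Integration.integrable_bound[OF gi'])
    show "AE x in lborel. norm (indicator S x *\<^sub>R (g x * D x)) \<le> norm (indicator S x * (B * g x))"
      using DB by eventually_elim
        (auto simp: indicator_def abs_mult gnn mult.commute[of "g _"] intro!: mult_right_mono)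
  qed measurable
  have i2: "set_integrable lborel S (\<lambda>x. B * g x)" "set_integrable lborel S (\<lambda>x. (- B) * g x)"
    using set_integrable_mult_right[OF gi, of B] set_integrable_mult_right[OF gi, of "-B"] by auto
  have "(LBINT x:S. g x * D x) \<le> (LBINT x:S. B * g x)"
    using DB by (intro set_integral_mono_AE[OF si i2(1)]) (auto elim!: eventually_mono
          simp: gnn mult.commute[of "g _"] intro!: mult_right_mono)
  moreover have "(LBINT x:S. (- B) * g x) \<le> (LBINT x:S. g x * D x)"
      using DB by (intro set_integral_mono_AE[OF i2(2) si]) (auto elim!: eventually_mono
          simp: gnn mult.commute[of "g _"] dest!: aux_absb[OF _ gnn])
  moreover have "(LBINT x:S. B * g x) = B * (LBINT x:S. g x)" "(LBINT x:S. (-B) * g x) = - B * (LBINT x:S. g x)"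
    using set_integral_mult_right[where a=B and M=lborel and A=S and f=g] set_integral_mult_right[where a="-B" and M=lborel and A=S and f=g] by simp_all
  ultimately show "\<bar>LBINT x:S. g x * D x\<bar> \<le> B * (LBINT x:S. g x)" by linarith
qed

definition IC :: "real \<Rightarrow> (real \<Rightarrow> real) \<Rightarrow> real \<Rightarrow> real" where
  "IC a D r = (LBINT \<tau>:{0<..<r}. (r - \<tau>) powr (-a) * D \<tau>)"

lemma IC_int:
  fixes D :: "real \<Rightarrow> real"
  assumes a: "0 < a" "a < 1" and Dm[measurable]: "D \<in> borel_measurable borel"
    and DB: "AE x in lborel. \<bar>D x\<bar> \<le> B" and cr: "c \<le> r"
  shows "set_integrable lborel {c<..<r} (\<lambda>\<tau>. (r - \<tau>) powr (-a) * D \<tau>)"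
    "\<bar>LBINT \<tau>:{c<..<r}. (r - \<tau>) powr (-a) * D \<tau>\<bar> \<le> B * ((r - c) powr (1 - a) / (1 - a))"
  using GL[OF Dm DB _ conjunct1[OF pow_int[OF a cr]]] conjunct2[OF pow_int[OF a cr]] by auto

lemma IC_holder:
  fixes D :: "real \<Rightarrow> real"
  assumes a: "0 < a" "a < 1" and Dm[measurable]: "D \<in> borel_measurable borel"
    and DB: "AE x in lborel. \<bar>D x\<bar> \<le> B" and B: "0 \<le> B" and tt: "0 \<le> t'" "t' \<le> t"
  shows "\<bar>IC a D t - IC a D t'\<bar> \<le> 2 * B / (1 - a) * (t - t') powr (1 - a)"
proof -
  let ?K = "\<lambda>r \<tau>. (r - \<tau>) powr (-a)"
  have i1: "set_integrable lborel {0<..<t} (\<lambda>\<tau>. ?K t \<tau> * D \<tau>)"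
    using IC_int[OF a Dm DB] tt by auto
  note sp = split_Ioo[OF i1, of t'] 
  have e1: "IC a D t = (LBINT \<tau>:{0<..<t'}. ?K t \<tau> * D \<tau>) + (LBINT \<tau>:{t'<..<t}. ?K t \<tau> * D \<tau>)"
    unfolding IC_def using sp tt by auto
  have b1: "\<bar>LBINT \<tau>:{t'<..<t}. ?K t \<tau> * D \<tau>\<bar> \<le> B * ((t - t') powr (1 - a) / (1 - a))"
    using IC_int[OF a Dm DB tt(2)] by auto
  have pi: "set_integrable lborel {0<..<t} (?K t)" "(LBINT x:{0<..<t}. ?K t x) = t powr (1 - a) / (1 - a)"
    using pow_int[OF a, of 0 t] tt by auto
  note sp2 = split_Ioo[OF pi(1), of t']
  have pi2: "set_integrable lborel {0<..<t'} (?K t')" "(LBINT x:{0<..<t'}. ?K t' x) = t' powr (1 - a) / (1 - a)"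
    using pow_int[OF a, of 0 t'] tt by auto
  have pi3: "(LBINT x:{t'<..<t}. ?K t x) = (t - t') powr (1 - a) / (1 - a)"
    using pow_int[OF a tt(2)] by auto
  define g where "g \<tau> = ?K t' \<tau> - ?K t \<tau>" for \<tau>
  have gi: "set_integrable lborel {0<..<t'} g" unfolding g_def using pi2(1) sp2(1) tt by auto
  have gnn: "0 \<le> g \<tau>" if "\<tau> \<in> {0<..<t'}" for \<tau>
    unfolding g_def using that tt a by (auto intro!: powr_mono2')
  have gval: "(LBINT \<tau>:{0<..<t'}. g \<tau>) = (t' powr (1 - a) - t powr (1 - a) + (t - t') powr (1 - a)) / (1 - a)"
  proof -
    have "(LBINT \<tau>:{0<..<t'}. g \<tau>) = t' powr (1 - a) / (1 - a) - (LBINT x:{0<..<t'}. ?K t x)"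
      unfolding g_def using pi2 sp2 tt by (simp add: set_integral_diff(2))
    moreover have "(LBINT x:{0<..<t'}. ?K t x) = t powr (1 - a) / (1 - a) - (t - t') powr (1 - a) / (1 - a)"
      using sp2(3) pi pi3 tt by simp
    ultimately show ?thesis by (simp add: diff_divide_distrib add_divide_distrib)
  qed
  have gle: "(LBINT \<tau>:{0<..<t'}. g \<tau>) \<le> (t - t') powr (1 - a) / (1 - a)"
  proof -
    have "t' powr (1 - a) \<le> t powr (1 - a)" using tt a by (intro powr_mono2) auto
    then show ?thesis unfolding gval using a by (intro divide_right_mono) auto
  qed
  have gD: "set_integrable lborel {0<..<t'} (\<lambda>\<tau>. g \<tau> * D \<tau>)"
    "\<bar>LBINT \<tau>:{0<..<t'}. g \<tau> * D \<tau>\<bar> \<le> B * (LBINT \<tau>:{0<..<t'}. g \<tau>)"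
    using GL[OF Dm DB _ gi _ gnn] unfolding g_def by auto
  have i2: "set_integrable lborel {0<..<t'} (\<lambda>\<tau>. ?K t' \<tau> * D \<tau>)"
    using IC_int[OF a Dm DB, of 0 t'] tt by auto
  have "IC a D t - IC a D t' = (LBINT \<tau>:{t'<..<t}. ?K t \<tau> * D \<tau>) - (LBINT \<tau>:{0<..<t'}. g \<tau> * D \<tau>)"
  proof -
    have "(LBINT \<tau>:{0<..<t'}. g \<tau> * D \<tau>) = (LBINT \<tau>:{0<..<t'}. ?K t' \<tau> * D \<tau> - ?K t \<tau> * D \<tau>)"
      unfolding g_def by (simp add: algebra_simps)
    also have "\<dots> = IC a D t' - (LBINT \<tau>:{0<..<t'}. ?K t \<tau> * D \<tau>)"
      unfolding IC_def using i2 sp(1) tt by (simp add: set_integral_diff(2))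
    finally show ?thesis using e1 by simp
  qed
  then have "\<bar>IC a D t - IC a D t'\<bar> \<le> B * ((t - t') powr (1 - a) / (1 - a)) + B * ((t - t') powr (1 - a) / (1 - a))"
    using b1 gD(2) mult_left_mono[OF gle B] by linarith
  then show ?thesis by (simp add: field_simps)
qed

lemma alg:
  fixes A u v w W Q a :: real
  assumes pos: "0 < A" "0 < u" "0 < v" "0 < w" "0 < W" "0 < Q" and rel: "Q * w - A * u = v * W"
  shows "(A*u/(Q*w)) powr (-a) * (1 - A*u/(Q*w)) powr (a-1) * (A*W/(Q*w^2)) =
         W powr a * (v powr (a-1) * A powr (1-a) / w) * u powr (-a)"
proof -
  have "1 - A*u/(Q*w) = (Q * w - A * u)/(Q*w)" using pos by (simp add: field_simps)
  then have e: "1 - A*u/(Q*w) = v * W/(Q*w)" using rel by simp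
  show ?thesis unfolding e using pos
    by (simp add: powr_divide powr_mult powr_minus powr_diff field_simps power2_eq_square)
qed

definition phi :: "real \<Rightarrow> real \<Rightarrow> real \<Rightarrow> real \<Rightarrow> real" where
  "phi a s t r = (s - r) powr (a - 1) * (t - s) powr (1 - a) / (t - r)"

lemma KI:
  fixes a s t \<tau> :: real
  assumes a: "0 < a" "a < 1" and ts: "\<tau> < s" "s < t"
  shows "set_integrable lborel {\<tau><..<s} (\<lambda>r. phi a s t r * (r - \<tau>) powr (-a)) \<and>
    (LBINT r:{\<tau><..<s}. phi a s t r * (r - \<tau>) powr (-a)) = Beta (1 - a) a * (t - \<tau>) powr (-a)"
proof -
  define h where "h r = phi a s t r * (r - \<tau>) powr (-a)" for r
  define f where "f y = y powr (-a) * (1 - y) powr (a - 1)" for y :: real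
  define g where "g r = (t - s) * (r - \<tau>) / ((s - \<tau>) * (t - r))" for r
  define g' where "g' r = (t - s) * (t - \<tau>) / ((s - \<tau>) * (t - r)^2)" for r
  have hm[measurable]: "h \<in> borel_measurable borel" unfolding h_def phi_def by measurable
  have fm[measurable]: "f \<in> borel_measurable borel" unfolding f_def by measurable
  have gm[measurable]: "g \<in> borel_measurable borel" unfolding g_def by measurable
  have g'm[measurable]: "g' \<in> borel_measurable borel" unfolding g'_def by measurable
  have g0: "g \<tau> = 0" and g1: "g s = 1" unfolding g_def using ts by auto
  have sub: "(\<integral>\<^sup>+y. f y * indicator {g \<tau>..g s} y \<partial>lborel) =
             (\<integral>\<^sup>+r. f (g r) * g' r * indicator {\<tau>..s} r \<partial>lborel)"
  proof (rule nn_integral_substitution)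
    show "set_borel_measurable borel {g \<tau>..g s} f" unfolding set_borel_measurable_def by measurable
    show "(g has_real_derivative g' x) (at x)" if "x \<in> {\<tau>..s}" for x
    proof -
      have xt: "x < t" using that ts by auto
      have d1: "((\<lambda>r. (r - \<tau>) / (t - r)) has_real_derivative (t - \<tau>) / (t - x)^2) (at x)"
        by (rule DERIV_cong, (rule derivative_eq_intros refl)+) (use xt in \<open>auto simp: field_simps power2_eq_square\<close>)
      have d2: "((\<lambda>r. (t - s) / (s - \<tau>) * ((r - \<tau>) / (t - r))) has_real_derivative
                 (t - s) / (s - \<tau>) * ((t - \<tau>) / (t - x)^2)) (at x)"
        by (intro DERIV_cmult d1)
      have "g = (\<lambda>r. (t - s) / (s - \<tau>) * ((r - \<tau>) / (t - r)))" unfolding g_def by (auto simp: fun_eq_iff)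
      moreover have "g' x = (t - s) / (s - \<tau>) * ((t - \<tau>) / (t - x)^2)" unfolding g'_def by simp
      ultimately show ?thesis using d2 by simp
    qed
    show "continuous_on {\<tau>..s} g'" unfolding g'_def using ts
      by (intro continuous_intros) auto
    show "0 \<le> g' x" if "x \<in> {\<tau>..s}" for x unfolding g'_def using ts that by auto
  qed (use ts in auto)
  have beta: "(\<integral>\<^sup>+y. f y * indicator {0..1} y \<partial>lborel) = ennreal (Beta (1 - a) a)"
  proof -
    have "(f has_integral Beta (1 - a) a) {0..1}"
      using has_integral_Beta_real[of "1 - a" a] a unfolding f_def by simp
    from nn_integral_has_integral_lebesgue[OF _ this]
    have "integral\<^sup>N lborel (\<lambda>x. indicator {0..1} x * f x) = Beta (1 - a) a"
      unfolding f_def by auto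
    then show ?thesis by (simp add: mult.commute)
  qed
  have pw: "f (g r) * g' r = (t - \<tau>) powr a * h r" if "r \<in> {\<tau><..<s}" for r
  proof -
    have pos: "0 < t - s" "0 < r - \<tau>" "0 < s - r" "0 < t - r" "0 < t - \<tau>" "0 < s - \<tau>"
      using that ts by auto
    have rel: "(s - \<tau>) * (t - r) - (t - s) * (r - \<tau>) = (s - r) * (t - \<tau>)"
      by (simp add: algebra_simps)
    show ?thesis using alg[OF pos(1,2,3,4,5,6) rel, of a]
      unfolding f_def g_def g'_def h_def phi_def by (simp add: mult_ac)
  qed
  have nn: "(\<integral>\<^sup>+r. ennreal (h r * indicator {\<tau>..s} r) \<partial>lborel) =
        ennreal ((t - \<tau>) powr (-a)) * ennreal (Beta (1 - a) a)"
  proof -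
    have "(\<integral>\<^sup>+r. ennreal (h r * indicator {\<tau>..s} r) \<partial>lborel) =
          (\<integral>\<^sup>+r. ennreal ((t - \<tau>) powr (-a)) * ennreal (f (g r) * g' r * indicator {\<tau>..s} r) \<partial>lborel)"
    proof (rule nn_integral_cong_AE)
      have "AE r in lborel. r \<noteq> \<tau>" "AE r in lborel. r \<noteq> s" by (auto intro: AE_lborel_singleton)
      then show "AE r in lborel. ennreal (h r * indicator {\<tau>..s} r) =
          ennreal ((t - \<tau>) powr (-a)) * ennreal (f (g r) * g' r * indicator {\<tau>..s} r)"
      proof eventually_elim
        case (elim r)
        show ?case
        proof (cases "r \<in> {\<tau><..<s}")
          case True
          have "h r = (t - \<tau>) powr (-a) * (f (g r) * g' r)"
            using pw[OF True] ts by (simp add: powr_minus field_simps)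
          then have "ennreal (h r) = ennreal ((t - \<tau>) powr (-a)) * ennreal (f (g r) * g' r)"
            by (simp add: ennreal_mult')
          then show ?thesis using True by simp
        next
          case False
          then have "r \<notin> {\<tau>..s}" using elim by auto
          then show ?thesis by simp
        qed
      qed
    qed
    also have "\<dots> = ennreal ((t - \<tau>) powr (-a)) * (\<integral>\<^sup>+r. ennreal (f (g r) * g' r * indicator {\<tau>..s} r) \<partial>lborel)"
      by (rule nn_integral_cmult) measurable
    also have "(\<integral>\<^sup>+r. ennreal (f (g r) * g' r * indicator {\<tau>..s} r) \<partial>lborel) = ennreal (Beta (1 - a) a)"
      using sub beta unfolding g0 g1 by simp
    finally show ?thesis .
  qed
  have Bpos: "0 \<le> Beta (1 - a) a"
    using a by (simp add: Beta_def Gamma_real_pos less_imp_le)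
  have nn': "(\<integral>\<^sup>+r. ennreal (h r * indicator {\<tau>..s} r) \<partial>lborel) = ennreal (Beta (1 - a) a * (t - \<tau>) powr (-a))"
    unfolding nn using Bpos by (simp add: ennreal_mult'[symmetric] mult.commute)
  have hnn: "0 \<le> h r * indicator {\<tau>..s} r" for r
    unfolding h_def phi_def using ts by (auto simp: indicator_def intro!: mult_nonneg_nonneg divide_nonneg_nonneg)
  have int: "integrable lborel (\<lambda>r. h r * indicator {\<tau>..s} r)"
    by (rule integrableI_nn_integral_finite[OF _ _ nn']) (auto simp: hnn)
  have val: "integral\<^sup>L lborel (\<lambda>r. h r * indicator {\<tau>..s} r) = Beta (1 - a) a * (t - \<tau>) powr (-a)"
    using integral_eq_nn_integral[of "\<lambda>r. h r * indicator {\<tau>..s} r" lborel] nn' hnn Bpos ts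
    by (simp add: enn2real_ennreal)
  have "set_integrable lborel {\<tau>..s} h \<and> (LBINT r:{\<tau>..s}. h r) = Beta (1 - a) a * (t - \<tau>) powr (-a)"
    using int val unfolding set_integrable_def set_lebesgue_integral_def by (simp add: mult.commute)
  then show ?thesis unfolding h_def using Icc_Ioo by metis
qed

lemma phi_nn: "r < s \<Longrightarrow> s < t \<Longrightarrow> 0 \<le> phi a s t r"
  unfolding phi_def by (auto intro!: divide_nonneg_nonneg mult_nonneg_nonneg)

lemma MB:
  fixes a s t :: real
  assumes a: "0 < a" "a < 1" and ts: "0 < s" "s < t"
  shows "set_integrable lborel {0<..<s} (phi a s t) \<and>
    (LBINT r:{0<..<s}. phi a s t r) \<le> Beta (1 - a) a * (s / t) powr a"
proof -
  note ki = KI[OF a ts]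
  have phim[measurable]: "phi a s t \<in> borel_measurable borel" unfolding phi_def by measurable
  have ki': "set_integrable lborel {0<..<s} (\<lambda>r. s powr a * (phi a s t r * r powr (-a)))"
    using ki by (intro set_integrable_mult_right) auto
  have le: "phi a s t r \<le> s powr a * (phi a s t r * r powr (-a))" if "r \<in> {0<..<s}" for r
  proof -
    have "s powr (-a) \<le> r powr (-a)" using that a by (intro powr_mono2') auto
    then have "1 \<le> s powr a * r powr (-a)" using that ts
      by (simp add: powr_minus field_simps)
    then have "phi a s t r * 1 \<le> phi a s t r * (s powr a * r powr (-a))"
      using phi_nn[of r s t a] that ts by (intro mult_left_mono) auto
    then show ?thesis by (simp add: mult_ac)
  qed
  have si: "set_integrable lborel {0<..<s} (phi a s t)"
  proof (rule set_integrable_bound[OF ki'])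
    show "set_borel_measurable lborel {0<..<s} (phi a s t)"
      unfolding set_borel_measurable_def by measurable
    show "AE x in lborel. x \<in> {0<..<s} \<longrightarrow> norm (phi a s t x) \<le> norm (s powr a * (phi a s t x * x powr - a))"
      using le phi_nn[of _ s t a] ts by (auto intro!: AE_I2 simp: abs_of_nonneg)
  qed
  have "(LBINT r:{0<..<s}. phi a s t r) \<le> (LBINT r:{0<..<s}. s powr a * (phi a s t r * r powr (-a)))"
    by (rule set_integral_mono[OF si ki' le])
  also have "\<dots> = s powr a * (Beta (1 - a) a * t powr (-a))"
    using ki by (simp add: set_integral_mult_right)
  also have "\<dots> = Beta (1 - a) a * (s / t) powr a"
    using ts by (simp add: powr_divide powr_minus field_simps)
  finally show ?thesis using si by simp
qed

lemma FB:
  fixes D :: "real \<Rightarrow> real"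
  assumes a: "0 < a" "a < 1" and Dm[measurable]: "D \<in> borel_measurable borel"
    and DB: "AE x in lborel. \<bar>D x\<bar> \<le> B" and B: "0 \<le> B" and ts: "0 < s" "s < t"
  shows "set_integrable lborel {0<..<s} (\<lambda>r. phi a s t r * IC a D r) \<and>
    Beta (1 - a) a * (LBINT \<tau>:{0<..<s}. (t - \<tau>) powr (-a) * D \<tau>) =
    (LBINT r:{0<..<s}. phi a s t r * IC a D r)"
proof -
  define F where "F r \<tau> = (if 0 < r \<and> r < s \<and> 0 < \<tau> \<and> \<tau> < r then phi a s t r * ((r - \<tau>) powr (-a) * D \<tau>) else 0)"
    for r \<tau> :: real
  have phim[measurable]: "phi a s t \<in> borel_measurable borel" unfolding phi_def by measurable
  have Fm[measurable]: "case_prod F \<in> borel_measurable (lborel \<Otimes>\<^sub>M lborel)"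
    unfolding F_def case_prod_beta by measurable
  have Fr: "(\<integral>\<tau>. F r \<tau> \<partial>lborel) = indicator {0<..<s} r * (phi a s t r * IC a D r)" for r
  proof (cases "0 < r \<and> r < s")
    case True
    have "(\<integral>\<tau>. F r \<tau> \<partial>lborel) = (\<integral>\<tau>. phi a s t r * (indicator {0<..<r} \<tau> *\<^sub>R ((r - \<tau>) powr (-a) * D \<tau>)) \<partial>lborel)"
      using True by (intro Bochner_Integration.integral_cong) (auto simp: F_def indicator_def)
    also have "\<dots> = phi a s t r * IC a D r"
      unfolding IC_def set_lebesgue_integral_def by simp
    finally show ?thesis using True by simp
  next
    case False
    then have "F r = (\<lambda>_. 0)" by (auto simp: F_def fun_eq_iff)
    then show ?thesis using False by simp
  qed
  have Fabs: "(\<integral>\<tau>. norm (F r \<tau>) \<partial>lborel) \<le> indicator {0<..<s} r * (phi a s t r * (B * (s powr (1 - a) / (1 - a))))" for r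
  proof (cases "0 < r \<and> r < s")
    case True
    have "(\<integral>\<tau>. norm (F r \<tau>) \<partial>lborel) = (\<integral>\<tau>. phi a s t r * (indicator {0<..<r} \<tau> *\<^sub>R ((r - \<tau>) powr (-a) * \<bar>D \<tau>\<bar>)) \<partial>lborel)"
      using True phi_nn[of r s t a] ts
      by (intro Bochner_Integration.integral_cong) (auto simp: F_def indicator_def abs_mult)
    also have "\<dots> = phi a s t r * (LBINT \<tau>:{0<..<r}. (r - \<tau>) powr (-a) * \<bar>D \<tau>\<bar>)"
      unfolding set_lebesgue_integral_def by simp
    also have "\<dots> \<le> phi a s t r * (B * (r powr (1 - a) / (1 - a)))"
    proof -
      have DB': "AE x in lborel. \<bar>\<bar>D x\<bar>\<bar> \<le> B" using DB by simp
      have "\<bar>LBINT \<tau>:{0<..<r}. (r - \<tau>) powr (-a) * \<bar>D \<tau>\<bar>\<bar> \<le> B * ((r - 0) powr (1 - a) / (1 - a))"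
        using IC_int(2)[OF a _ DB', of 0 r] True by auto
      then show ?thesis using phi_nn[of r s t a] True ts by (intro mult_left_mono) auto
    qed
    also have "\<dots> \<le> phi a s t r * (B * (s powr (1 - a) / (1 - a)))"
      using phi_nn[of r s t a] True ts a B
      by (intro mult_left_mono divide_right_mono powr_mono2) auto
    finally show ?thesis using True by simp
  next
    case False
    then have "F r = (\<lambda>_. 0)" by (auto simp: F_def fun_eq_iff)
    then show ?thesis using False by simp
  qed
  have Fint: "integrable (lborel \<Otimes>\<^sub>M lborel) (case_prod F)"
  proof (rule lborel_pair.Fubini_integrable)
    show "integrable lborel (\<lambda>r. \<integral>\<tau>. norm (case_prod F (r, \<tau>)) \<partial>lborel)"
    proof (rule Bochner_Integration.integrable_bound)
      show "integrable lborel (\<lambda>r. indicator {0<..<s} r * (phi a s t r * (B * (s powr (1 - a) / (1 - a)))))"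
        using integrable_mult_left[OF conjunct1[OF MB[OF a ts], unfolded set_integrable_def], of "B * (s powr (1 - a) / (1 - a))"]
        by (simp add: mult_ac)
      show "AE r in lborel. norm (\<integral>\<tau>. norm (case_prod F (r, \<tau>)) \<partial>lborel) \<le>
          norm (indicator {0<..<s} r * (phi a s t r * (B * (s powr (1 - a) / (1 - a)))))"
      proof (rule AE_I2)
        fix r
        have z1: "0 \<le> (\<integral>\<tau>. norm (F r \<tau>) \<partial>lborel)" by (rule integral_nonneg_AE) auto
        have z2: "0 \<le> indicator {0<..<s} r * (phi a s t r * (B * (s powr (1 - a) / (1 - a))))"
          using phi_nn[of r s t a] ts B a by (auto simp: indicator_def)
        have n1: "norm (\<integral>\<tau>. norm (case_prod F (r, \<tau>)) \<partial>lborel) = (\<integral>\<tau>. norm (F r \<tau>) \<partial>lborel)"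
          using z1 by simp
        have n2: "norm (indicator {0<..<s} r * (phi a s t r * (B * (s powr (1 - a) / (1 - a))))) =
           indicator {0<..<s} r * (phi a s t r * (B * (s powr (1 - a) / (1 - a))))"
          using z2 by (simp only: real_norm_def abs_of_nonneg)
        show "norm (\<integral>\<tau>. norm (case_prod F (r, \<tau>)) \<partial>lborel) \<le>
          norm (indicator {0<..<s} r * (phi a s t r * (B * (s powr (1 - a) / (1 - a)))))"
          unfolding n1 n2 by (rule Fabs)
      qed
    qed measurable
    show "AE r in lborel. integrable lborel (\<lambda>\<tau>. case_prod F (r, \<tau>))"
    proof (rule AE_I2)
      fix r
      show "integrable lborel (\<lambda>\<tau>. case_prod F (r, \<tau>))"
      proof (cases "0 < r \<and> r < s")
        case True
        have "set_integrable lborel {0<..<r} (\<lambda>\<tau>. (r - \<tau>) powr (-a) * D \<tau>)"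
          using IC_int(1)[OF a Dm DB, of 0 r] True by auto
        then have "integrable lborel (\<lambda>\<tau>. phi a s t r * (indicator {0<..<r} \<tau> *\<^sub>R ((r - \<tau>) powr (-a) * D \<tau>)))"
          unfolding set_integrable_def by (intro integrable_mult_right)
        moreover have "F r = (\<lambda>\<tau>. phi a s t r * (indicator {0<..<r} \<tau> *\<^sub>R ((r - \<tau>) powr (-a) * D \<tau>)))"
          using True by (auto simp: F_def indicator_def fun_eq_iff)
        ultimately show ?thesis by simp
      next
        case False
        then have "F r = (\<lambda>_. 0)" by (auto simp: F_def fun_eq_iff)
        then show ?thesis by simp
      qed
    qed
  qed measurable
  have Ft: "(\<integral>r. F r \<tau> \<partial>lborel) = indicator {0<..<s} \<tau> * (Beta (1 - a) a * ((t - \<tau>) powr (-a) * D \<tau>))" for \<tau>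
  proof (cases "0 < \<tau> \<and> \<tau> < s")
    case True
    have "(\<integral>r. F r \<tau> \<partial>lborel) = (\<integral>r. (indicator {\<tau><..<s} r *\<^sub>R (phi a s t r * (r - \<tau>) powr (-a))) * D \<tau> \<partial>lborel)"
      using True by (intro Bochner_Integration.integral_cong) (auto simp: F_def indicator_def)
    also have "\<dots> = (LBINT r:{\<tau><..<s}. phi a s t r * (r - \<tau>) powr (-a)) * D \<tau>"
      unfolding set_lebesgue_integral_def by simp
    also have "\<dots> = Beta (1 - a) a * (t - \<tau>) powr (-a) * D \<tau>"
      using KI[OF a _ ts(2), of \<tau>] True by simp
    finally show ?thesis using True by simp
  next
    case False
    then have "(\<lambda>r. F r \<tau>) = (\<lambda>_. 0)" by (auto simp: F_def fun_eq_iff)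
    then show ?thesis using False by (simp add: indicator_def)
  qed
  have fub: "(\<integral>\<tau>. (\<integral>r. F r \<tau> \<partial>lborel) \<partial>lborel) = (\<integral>r. (\<integral>\<tau>. F r \<tau> \<partial>lborel) \<partial>lborel)"
    by (rule lborel_pair.Fubini_integral) (use Fint in simp)
  have int2: "integrable lborel (\<lambda>r. \<integral>\<tau>. F r \<tau> \<partial>lborel)"
    using lborel_pair.integrable_fst'[OF Fint] by simp
  show ?thesis
  proof
    show "set_integrable lborel {0<..<s} (\<lambda>r. phi a s t r * IC a D r)"
      using int2 unfolding set_integrable_def Fr by simp
    have "Beta (1 - a) a * (LBINT \<tau>:{0<..<s}. (t - \<tau>) powr (-a) * D \<tau>) =
          (\<integral>\<tau>. (\<integral>r. F r \<tau> \<partial>lborel) \<partial>lborel)"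
      unfolding Ft set_lebesgue_integral_def
      by (subst integral_mult_right_zero[symmetric]) (simp add: mult_ac)
    also have "\<dots> = (LBINT r:{0<..<s}. phi a s t r * IC a D r)"
      unfolding fub Fr set_lebesgue_integral_def by simp
    finally show "Beta (1 - a) a * (LBINT \<tau>:{0<..<s}. (t - \<tau>) powr (-a) * D \<tau>) =
          (LBINT r:{0<..<s}. phi a s t r * IC a D r)" .
  qed
qed

lemma IC_cont:
  fixes D :: "real \<Rightarrow> real"
  assumes a: "0 < a" "a < 1" and Dm[measurable]: "D \<in> borel_measurable borel"
    and DB: "AE x in lborel. \<bar>D x\<bar> \<le> B" and B: "0 \<le> B"
  shows "continuous_on {0..} (IC a D)"
  unfolding continuous_on_def
proof
  fix x :: real assume x: "x \<in> {0..}"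
  have hb: "norm (IC a D y - IC a D x) \<le> 2 * B / (1 - a) * \<bar>y - x\<bar> powr (1 - a)" if "y \<in> {0..}" for y
  proof (cases "x \<le> y")
    case True
    then show ?thesis using IC_holder[OF a Dm DB B, of x y] x by auto
  next
    case False
    then show ?thesis using IC_holder[OF a Dm DB B, of y x] that by (auto simp: abs_minus_commute)
  qed
  have "((\<lambda>y. IC a D y - IC a D x) \<longlongrightarrow> 0) (at x within {0..})"
  proof (rule Lim_null_comparison)
    show "\<forall>\<^sub>F y in at x within {0..}. norm (IC a D y - IC a D x) \<le> 2 * B / (1 - a) * \<bar>y - x\<bar> powr (1 - a)"
      using hb by (auto simp: eventually_at_filter)
    have "((\<lambda>y. 2 * B / (1 - a) * \<bar>y - x\<bar> powr (1 - a)) \<longlongrightarrow> 2 * B / (1 - a) * \<bar>x - x\<bar> powr (1 - a)) (at x within {0..})"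
      using a by (intro tendsto_intros tendsto_powr') auto
    then show "((\<lambda>y. 2 * B / (1 - a) * \<bar>y - x\<bar> powr (1 - a)) \<longlongrightarrow> 0) (at x within {0..})" by simp
  qed
  then show "(IC a D \<longlongrightarrow> IC a D x) (at x within {0..})"
    by (simp add: Lim_null[symmetric])
qed

theorem lemma4p3:
  fixes \<alpha> lam p0 p1 T :: real and p z dz :: "real \<Rightarrow> real"
  assumes "0 < \<alpha>" "\<alpha> < 1" "lam > 0" "T > 0" "p0 > 0" "p1 > 0"
    and "set_borel_measurable lborel {0<..<T} p"
    and "AE t in lborel. t \<in> {0<..<T} \<longrightarrow> p0 \<le> p t \<and> p t \<le> p1"
    and "W1inf T z dz"
    and "\<forall>t\<in>{0<..<T}. z t \<ge> 0"
    and "AE t in lborel. t \<in> {0<..<T} \<longrightarrow> dz t + p t * caputo \<alpha> dz t + lam * z t \<le> 0"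
  shows "\<forall>t\<in>{0<..<T}. caputo \<alpha> dz t \<le> 0"
proof (rule ccontr)
  note a = assms(1,2)
  assume "\<not> (\<forall>t\<in>{0<..<T}. caputo \<alpha> dz t \<le> 0)"
  then obtain t1 where t1: "t1 \<in> {0<..<T}" "caputo \<alpha> dz t1 > 0" by auto
  from assms(9) have dzm: "set_borel_measurable lborel {0<..<T} dz"
    and "\<exists>C. AE t in lborel. t \<in> {0<..<T} \<longrightarrow> \<bar>dz t\<bar> \<le> C"
    unfolding W1inf_def by auto
  then obtain C where C: "AE t in lborel. t \<in> {0<..<T} \<longrightarrow> \<bar>dz t\<bar> \<le> C" by auto
  define B where "B = max C 0"
  have B: "0 \<le> B" unfolding B_def by simp
  define D where "D x = indicator {0<..<T} x * dz x" for x
  have Dm[measurable]: "D \<in> borel_measurable borel"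
    using dzm unfolding set_borel_measurable_def D_def by simp
  have DB: "AE x in lborel. \<bar>D x\<bar> \<le> B"
    using C by eventually_elim (auto simp: D_def B_def indicator_def)
  define G where "G = Gamma (1 - \<alpha>)"
  have G: "G > 0" unfolding G_def using a by simp
  define Cb where "Cb = Beta (1 - \<alpha>) \<alpha>"
  have Cb: "Cb > 0" unfolding Cb_def using a by (simp add: Beta_def)
  let ?I = "IC \<alpha> D"
  have cap: "caputo \<alpha> dz t = ?I t / G" if "t \<in> {0<..T}" for t
  proof -
    have "(LBINT \<tau>:{0<..<t}. (t - \<tau>) powr (-\<alpha>) * dz \<tau>) = ?I t"
      unfolding IC_def using that by (intro set_lebesgue_integral_cong) (auto simp: D_def)
    then show ?thesis unfolding caputo_def G_def by simp
  qed
  have I0: "?I 0 = 0" unfolding IC_def set_lebesgue_integral_def by simp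
  have It1: "?I t1 > 0"
  proof -
    have "G * caputo \<alpha> dz t1 = ?I t1" using cap[of t1] t1 G by (auto simp: field_simps)
    moreover have "G * caputo \<alpha> dz t1 > 0" using t1 G by simp
    ultimately show ?thesis by simp
  qed
  have cont: "continuous_on {0..t1} ?I"
    by (rule continuous_on_subset[OF IC_cont[OF a Dm DB B]]) auto
  obtain tb where tb: "tb \<in> {0..t1}" and tbmax: "\<And>r. r \<in> {0..t1} \<Longrightarrow> ?I r \<le> ?I tb"
    using continuous_attains_sup[OF compact_Icc _ cont] t1 by auto
  define M where "M = ?I tb"
  have M: "M > 0" using tbmax[of t1] t1 It1 unfolding M_def by auto
  have tbpos: "tb > 0"
  proof (rule ccontr)
    assume "\<not> tb > 0" then have "tb = 0" using tb by auto
    then show False using M I0 unfolding M_def by simp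
  qed
  have tbT: "tb < T" using tb t1 by auto
  obtain \<delta> where \<delta>: "\<delta> > 0" "\<And>r. r \<in> {0..t1} \<Longrightarrow> dist r tb < \<delta> \<Longrightarrow> dist (?I r) (?I tb) < M"
    using cont[unfolded continuous_on_iff] tb M by metis
  define s where "s = max (tb / 2) (tb - \<delta> / 2)"
  have s: "0 < s" "s < tb" unfolding s_def using tbpos \<delta> by auto
  have Ipos: "?I r > 0" if "r \<in> {s..tb}" for r
  proof -
    have "r \<in> {0..t1}" using that s tb by auto
    moreover have "dist r tb < \<delta>" using that \<delta> unfolding s_def dist_real_def by auto
    ultimately have "dist (?I r) (?I tb) < M" by (rule \<delta>(2))
    then show ?thesis unfolding M_def dist_real_def by auto
  qed
  have Dneg: "AE x in lborel. x \<in> {s<..<tb} \<longrightarrow> D x \<le> 0"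
    using assms(8,11)
  proof eventually_elim
    case (elim x)
    show ?case
    proof
      assume x: "x \<in> {s<..<tb}"
      then have xT: "x \<in> {0<..<T}" using s tbT by auto
      have px: "p0 \<le> p x" using elim xT by auto
      have cx: "caputo \<alpha> dz x > 0" using cap[of x] Ipos[of x] x xT G by auto
      have "0 \<le> p x * caputo \<alpha> dz x" using px assms(5) cx by auto
      moreover have "0 \<le> lam * z x" using assms(3,10) xT by auto
      ultimately have "dz x \<le> 0" using elim xT by linarith
      then show "D x \<le> 0" using xT by (simp add: D_def)
    qed
  qed
  have iI: "set_integrable lborel {0<..<tb} (\<lambda>\<tau>. (tb - \<tau>) powr (-\<alpha>) * D \<tau>)"
    using IC_int(1)[OF a Dm DB, of 0 tb] tbpos by auto
  note sp = split_Ioo[OF iI, of s]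
  have second: "(LBINT \<tau>:{s<..<tb}. (tb - \<tau>) powr (-\<alpha>) * D \<tau>) \<le> 0"
  proof -
    have "(LBINT \<tau>:{s<..<tb}. (tb - \<tau>) powr (-\<alpha>) * D \<tau>) \<le> (LBINT \<tau>:{s<..<tb}. 0)"
      using sp(2) s Dneg by (intro set_integral_mono_AE)
        (auto simp: set_integrable_def elim!: eventually_mono intro: mult_nonneg_nonpos)
    then show ?thesis by simp
  qed
  have fb: "set_integrable lborel {0<..<s} (\<lambda>r. phi \<alpha> s tb r * ?I r) \<and>
    Cb * (LBINT \<tau>:{0<..<s}. (tb - \<tau>) powr (-\<alpha>) * D \<tau>) = (LBINT r:{0<..<s}. phi \<alpha> s tb r * ?I r)"
    unfolding Cb_def by (rule FB[OF a Dm DB B s])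
  note mb = MB[OF a s]
  have "(LBINT r:{0<..<s}. phi \<alpha> s tb r * ?I r) \<le> (LBINT r:{0<..<s}. phi \<alpha> s tb r * M)"
  proof (rule set_integral_mono)
    show "set_integrable lborel {0<..<s} (\<lambda>r. phi \<alpha> s tb r * M)"
      using mb by (intro set_integrable_mult_left) auto
    show "phi \<alpha> s tb r * ?I r \<le> phi \<alpha> s tb r * M" if "r \<in> {0<..<s}" for r
      using tbmax[of r] that s tb phi_nn[of r s tb \<alpha>] unfolding M_def
      by (intro mult_left_mono) auto
  qed (use fb in auto)
  also have "\<dots> = (LBINT r:{0<..<s}. phi \<alpha> s tb r) * M" by simp
  also have "\<dots> \<le> Cb * (s / tb) powr \<alpha> * M"
    using mb M unfolding Cb_def by (intro mult_right_mono) auto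
  finally have first: "Cb * (LBINT \<tau>:{0<..<s}. (tb - \<tau>) powr (-\<alpha>) * D \<tau>) \<le> Cb * (s / tb) powr \<alpha> * M"
    using fb by simp
  have lt1: "(s / tb) powr \<alpha> < 1"
  proof -
    have "(s / tb) powr \<alpha> < 1 powr \<alpha>" using s a by (intro powr_less_mono2) auto
    then show ?thesis by simp
  qed
  have "Cb * M = Cb * (LBINT \<tau>:{0<..<s}. (tb - \<tau>) powr (-\<alpha>) * D \<tau>) +
        Cb * (LBINT \<tau>:{s<..<tb}. (tb - \<tau>) powr (-\<alpha>) * D \<tau>)"
    unfolding M_def IC_def using sp(3) s by (simp add: distrib_left)
  also have "\<dots> \<le> Cb * (s / tb) powr \<alpha> * M + 0"
    using first second Cb by (intro add_mono) (auto intro: mult_nonneg_nonpos)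
  also have "\<dots> < Cb * M"
    using lt1 Cb M by simp
  finally show False by simp
qed

end
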